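(* Let $f:X\to Y$ be a surjective continuous mapping with $X$ locally Menger. If $f$ is weakly perfect, or if $f$ is bi-quotient, then $Y$ is locally Menger.
   Context: A space $X$ is Menger if for each sequence $(\mathcal{U}_n)$ of open covers of $X$ there is a sequence $(\mathcal{V}_n)$ with each $\mathcal{V}_n$ a finite subset of $\mathcal{U}_n$ and $\bigcup_{n}\bigcup\mathcal{V}_n=X$. A space $X$ is locally Menger if for each $x\in X$ there exist an open set $U$ and a Menger subspace $Y$ of $X$ with $x\in U\subseteq Y$. A surjective continuous map $f:X\to Y$ is weakly perfect if $f$ is closed and $f^{-1}(y)$ is Lindelöf for every $y\in Y$. A surjective continuous map $f:X\to Y$ is bi-quotient if whenever $y\in Y$ and $\mathcal{U}$ is a cover of $f^{-1}(y)$ by open subsets of $X$, there are finitely many $U\in\mathcal{U}$ whose images $f(U)$ cover some open set of $Y$ containing $y$. *)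

theory Defs
  imports "HOL-Analysis.Analysis"
begin

definition open_cover :: "'a topology \<Rightarrow> 'a set set \<Rightarrow> bool" where
  "open_cover T \<U> \<longleftrightarrow> (\<forall>U\<in>\<U>. openin T U) \<and> topspace T \<subseteq> \<Union>\<U>"

definition Menger_space :: "'a topology \<Rightarrow> bool" where
  "Menger_space T \<longleftrightarrow>
     (\<forall>\<U> :: nat \<Rightarrow> 'a set set. (\<forall>n. open_cover T (\<U> n)) \<longrightarrow>
        (\<exists>\<V> :: nat \<Rightarrow> 'a set set. (\<forall>n. finite (\<V> n) \<and> \<V> n \<subseteq> \<U> n) \<and>
            (\<Union>n. \<Union>(\<V> n)) = topspace T))"

definition locally_Menger :: "'a topology \<Rightarrow> bool" where
  "locally_Menger X \<longleftrightarrow>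
     (\<forall>x\<in>topspace X. \<exists>U Y. openin X U \<and> Y \<subseteq> topspace X \<and>
        Menger_space (subtopology X Y) \<and> x \<in> U \<and> U \<subseteq> Y)"

definition weakly_perfect_map :: "'a topology \<Rightarrow> 'b topology \<Rightarrow> ('a \<Rightarrow> 'b) \<Rightarrow> bool" where
  "weakly_perfect_map X Y f \<longleftrightarrow>
     continuous_map X Y f \<and> f ` topspace X = topspace Y \<and> closed_map X Y f \<and>
     (\<forall>y\<in>topspace Y. Lindelof_space (subtopology X {x \<in> topspace X. f x = y}))"

definition biquotient_map :: "'a topology \<Rightarrow> 'b topology \<Rightarrow> ('a \<Rightarrow> 'b) \<Rightarrow> bool" where
  "biquotient_map X Y f \<longleftrightarrow>
     continuous_map X Y f \<and> f ` topspace X = topspace Y \<and>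
     (\<forall>y\<in>topspace Y. \<forall>\<U>. (\<forall>U\<in>\<U>. openin X U) \<and>
          {x \<in> topspace X. f x = y} \<subseteq> \<Union>\<U> \<longrightarrow>
        (\<exists>\<F> V. finite \<F> \<and> \<F> \<subseteq> \<U> \<and> openin Y V \<and> y \<in> V \<and>
              V \<subseteq> (\<Union>U\<in>\<F>. f ` U)))"

end

theory Submission
  imports Defs "HOL-Library.Nat_Bijection"
begin

definition Msub :: "'a topology \<Rightarrow> 'a set \<Rightarrow> bool" where
  "Msub T S \<longleftrightarrow> (\<forall>\<U> :: nat \<Rightarrow> 'a set set. (\<forall>n. (\<forall>U\<in>\<U> n. openin T U) \<and> S \<subseteq> \<Union>(\<U> n)) \<longrightarrow>
     (\<exists>\<V>. (\<forall>n. finite (\<V> n) \<and> \<V> n \<subseteq> \<U> n) \<and> S \<subseteq> (\<Union>n. \<Union>(\<V> n))))"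

lemma Menger_ex:
  fixes \<U> :: "nat \<Rightarrow> 'a set set"
  assumes a: "Menger_space T" and b: "\<forall>n. open_cover T (\<U> n)"
  shows "\<exists>\<V> :: nat \<Rightarrow> 'a set set. (\<forall>n. finite (\<V> n) \<and> \<V> n \<subseteq> \<U> n) \<and> (\<Union>n. \<Union>(\<V> n)) = topspace T"
proof -
  have "(\<forall>n. open_cover T (\<U> n)) \<longrightarrow> (\<exists>\<V> :: nat \<Rightarrow> 'a set set. (\<forall>n. finite (\<V> n) \<and> \<V> n \<subseteq> \<U> n) \<and> (\<Union>n. \<Union>(\<V> n)) = topspace T)"
    using a unfolding Menger_space_def by (rule spec)
  then show ?thesis using b by (rule mp)
qed

lemma Msub_ex:
  fixes \<U> :: "nat \<Rightarrow> 'a set set"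
  assumes a: "Msub T S" and b: "\<forall>n. (\<forall>U\<in>\<U> n. openin T U) \<and> S \<subseteq> \<Union>(\<U> n)"
  shows "\<exists>\<V> :: nat \<Rightarrow> 'a set set. (\<forall>n. finite (\<V> n) \<and> \<V> n \<subseteq> \<U> n) \<and> S \<subseteq> (\<Union>n. \<Union>(\<V> n))"
proof -
  have "(\<forall>n. (\<forall>U\<in>\<U> n. openin T U) \<and> S \<subseteq> \<Union>(\<U> n)) \<longrightarrow> (\<exists>\<V> :: nat \<Rightarrow> 'a set set. (\<forall>n. finite (\<V> n) \<and> \<V> n \<subseteq> \<U> n) \<and> S \<subseteq> (\<Union>n. \<Union>(\<V> n)))"
    using a unfolding Msub_def by (rule spec)
  then show ?thesis using b by (rule mp)
qed

lemma Menger_imp_Msub: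
  assumes "Menger_space (subtopology T S)" "S \<subseteq> topspace T"
  shows "Msub T S"
  unfolding Msub_def
proof (intro allI impI)
  fix \<U> :: "nat \<Rightarrow> 'a set set"
  assume H: "\<forall>n. (\<forall>U\<in>\<U> n. openin T U) \<and> S \<subseteq> \<Union>(\<U> n)"
  define \<U>' where "\<U>' n = (\<lambda>U. S \<inter> U) ` \<U> n" for n
  have "\<forall>n. open_cover (subtopology T S) (\<U>' n)"
  proof
    fix n
    have "\<forall>U\<in>\<U>' n. openin (subtopology T S) U"
      using H unfolding \<U>'_def by (auto simp: openin_subtopology_Int2)
    moreover have "topspace (subtopology T S) \<subseteq> \<Union>(\<U>' n)"
      using H unfolding \<U>'_def by auto
    ultimately show "open_cover (subtopology T S) (\<U>' n)" unfolding open_cover_def by blast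
  qed
  then obtain \<V> where V: "\<forall>n. finite (\<V> n) \<and> \<V> n \<subseteq> \<U>' n"
      "(\<Union>n. \<Union>(\<V> n)) = topspace (subtopology T S)"
    by (elim Menger_ex[OF assms(1), THEN exE] conjE)
  have "\<forall>n. \<exists>C. C \<subseteq> \<U> n \<and> finite C \<and> \<V> n = (\<lambda>U. S \<inter> U) ` C"
    using V(1) unfolding \<U>'_def by (meson finite_subset_image)
  then obtain C where C: "\<And>n. C n \<subseteq> \<U> n \<and> finite (C n) \<and> \<V> n = (\<lambda>U. S \<inter> U) ` C n"
    by metis
  show "\<exists>\<V>. (\<forall>n. finite (\<V> n) \<and> \<V> n \<subseteq> \<U> n) \<and> S \<subseteq> (\<Union>n. \<Union>(\<V> n))"
  proof (intro exI conjI allI)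
    show "S \<subseteq> (\<Union>n. \<Union>(C n))"
    proof
      fix x assume "x \<in> S"
      have ts: "topspace (subtopology T S) = S" using assms(2) by (simp add: Int_absorb1)
      have "x \<in> (\<Union>n. \<Union>(\<V> n))" using \<open>x \<in> S\<close> by (simp only: V(2) ts)
      then obtain n V where "V \<in> \<V> n" "x \<in> V" by (elim UN_E UnionE)
      moreover have "\<V> n = (\<lambda>U. S \<inter> U) ` C n" using C[of n] by blast
      ultimately have "V \<in> (\<lambda>U. S \<inter> U) ` C n" by simp
      then obtain U where "U \<in> C n" "V = S \<inter> U" by blast
      with \<open>x \<in> V\<close> have "U \<in> C n" "x \<in> U" by blast+
      then show "x \<in> (\<Union>n. \<Union>(C n))" by (intro UN_I UnionI) (rule UNIV_I)
    qed
  qed (use C in auto)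
qed

lemma Msub_imp_Menger:
  assumes "Msub T S" "S \<subseteq> topspace T"
  shows "Menger_space (subtopology T S)"
  unfolding Menger_space_def
proof (intro allI impI)
  fix \<U> :: "nat \<Rightarrow> 'a set set"
  assume H: "\<forall>n. open_cover (subtopology T S) (\<U> n)"
  have "\<forall>n U. \<exists>G. U \<in> \<U> n \<longrightarrow> openin T G \<and> U = S \<inter> G"
    using H unfolding open_cover_def by (metis openin_subtopology Int_commute)
  then obtain G where G: "\<And>n U. U \<in> \<U> n \<Longrightarrow> openin T (G n U) \<and> U = S \<inter> G n U"
    by metis
  have "\<forall>n. (\<forall>U\<in>G n ` \<U> n. openin T U) \<and> S \<subseteq> \<Union>(G n ` \<U> n)"
  proof (intro allI conjI)
    fix n
    show "\<forall>U\<in>G n ` \<U> n. openin T U" using G by auto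
    show "S \<subseteq> \<Union>(G n ` \<U> n)"
    proof
      fix x assume "x \<in> S"
      then have "x \<in> topspace (subtopology T S)" using assms(2) by auto
      then have "x \<in> \<Union>(\<U> n)" using H unfolding open_cover_def by blast
      then obtain U where "U \<in> \<U> n" "x \<in> U" by blast
      then show "x \<in> \<Union>(G n ` \<U> n)" using G by blast
    qed
  qed
  then obtain \<V> where V: "\<forall>n. finite (\<V> n) \<and> \<V> n \<subseteq> G n ` \<U> n"
      "S \<subseteq> (\<Union>n. \<Union>(\<V> n))"
    by (elim Msub_ex[OF assms(1), THEN exE] conjE)
  have "\<forall>n. \<exists>C. C \<subseteq> \<U> n \<and> finite C \<and> \<V> n = G n ` C"
    using V(1) by (meson finite_subset_image)
  then obtain C where C: "\<And>n. C n \<subseteq> \<U> n \<and> finite (C n) \<and> \<V> n = G n ` C n"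
    by metis
  show "\<exists>\<V>. (\<forall>n. finite (\<V> n) \<and> \<V> n \<subseteq> \<U> n) \<and> (\<Union>n. \<Union>(\<V> n)) = topspace (subtopology T S)"
  proof (intro exI conjI allI)
    show "(\<Union>n. \<Union>(C n)) = topspace (subtopology T S)"
    proof
      show "(\<Union>n. \<Union>(C n)) \<subseteq> topspace (subtopology T S)"
      proof
        fix x assume "x \<in> (\<Union>n. \<Union>(C n))"
        then obtain n U where "U \<in> C n" "x \<in> U" by blast
        then have "U \<in> \<U> n" using C by blast
        then have "openin (subtopology T S) U" using H unfolding open_cover_def by blast
        then show "x \<in> topspace (subtopology T S)" using openin_subset \<open>x \<in> U\<close> by blast
      qed
      show "topspace (subtopology T S) \<subseteq> (\<Union>n. \<Union>(C n))"
      proof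
        fix x assume "x \<in> topspace (subtopology T S)"
        then have xS: "x \<in> S" by auto
        then obtain n V where "V \<in> \<V> n" "x \<in> V" using V(2) by auto
        then obtain U where "U \<in> C n" "x \<in> G n U" using C by auto
        then have "x \<in> U" using G C xS by blast
        then show "x \<in> (\<Union>n. \<Union>(C n))" using \<open>U \<in> C n\<close> by blast
      qed
    qed
  qed (use C in auto)
qed

lemma Msub_image:
  assumes "Msub X M" "M \<subseteq> topspace X" "continuous_map X Y f"
  shows "Msub Y (f ` M)"
  unfolding Msub_def
proof (intro allI impI)
  fix \<U> :: "nat \<Rightarrow> 'b set set"
  assume H: "\<forall>n. (\<forall>U\<in>\<U> n. openin Y U) \<and> f ` M \<subseteq> \<Union>(\<U> n)"
  define g where "g U = {x \<in> topspace X. f x \<in> U}" for U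
  have "\<forall>n. (\<forall>U\<in>g ` \<U> n. openin X U) \<and> M \<subseteq> \<Union>(g ` \<U> n)"
  proof (intro allI conjI)
    fix n
    show "\<forall>U\<in>g ` \<U> n. openin X U"
      using H assms(3) unfolding g_def by (auto intro: openin_continuous_map_preimage)
    show "M \<subseteq> \<Union>(g ` \<U> n)"
    proof
      fix x assume x: "x \<in> M"
      then have "f x \<in> \<Union>(\<U> n)" using H by blast
      then obtain U where "U \<in> \<U> n" "f x \<in> U" by blast
      then show "x \<in> \<Union>(g ` \<U> n)" using x assms(2) unfolding g_def by blast
    qed
  qed
  then obtain \<V> where V: "\<forall>n. finite (\<V> n) \<and> \<V> n \<subseteq> g ` \<U> n"
      "M \<subseteq> (\<Union>n. \<Union>(\<V> n))"
    by (elim Msub_ex[OF assms(1), THEN exE] conjE)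
  have "\<forall>n. \<exists>C. C \<subseteq> \<U> n \<and> finite C \<and> \<V> n = g ` C"
    using V(1) by (meson finite_subset_image)
  then obtain C where C: "\<And>n. C n \<subseteq> \<U> n \<and> finite (C n) \<and> \<V> n = g ` C n"
    by metis
  show "\<exists>\<V>. (\<forall>n. finite (\<V> n) \<and> \<V> n \<subseteq> \<U> n) \<and> f ` M \<subseteq> (\<Union>n. \<Union>(\<V> n))"
  proof (intro exI conjI allI)
    show "f ` M \<subseteq> (\<Union>n. \<Union>(C n))"
    proof
      fix y assume "y \<in> f ` M"
      then obtain x where "x \<in> M" "y = f x" by auto
      then obtain n V where "V \<in> \<V> n" "x \<in> V" using V(2) by auto
      then obtain U where "U \<in> C n" "x \<in> g U" using C by auto
      then show "y \<in> (\<Union>n. \<Union>(C n))" using \<open>y = f x\<close> unfolding g_def by blast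
    qed
  qed (use C in auto)
qed

lemma Msub_Union:
  assumes "countable \<M>" "\<And>M. M \<in> \<M> \<Longrightarrow> Msub T M"
  shows "Msub T (\<Union>\<M>)"
proof (cases "\<M> = {}")
  case True
  show ?thesis unfolding Msub_def
  proof (intro allI impI)
    fix \<U> :: "nat \<Rightarrow> 'a set set"
    show "\<exists>\<V>. (\<forall>n. finite (\<V> n) \<and> \<V> n \<subseteq> \<U> n) \<and> \<Union>\<M> \<subseteq> (\<Union>n. \<Union>(\<V> n))"
      by (rule exI[of _ "\<lambda>n. {}"]) (simp add: True)
  qed
next
  case False
  define h where "h = from_nat_into \<M>"
  have rh: "range h = \<M>" using False assms(1) h_def by simp
  show ?thesis
    unfolding Msub_def
  proof (intro allI impI)
    fix \<U> :: "nat \<Rightarrow> 'a set set"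
    assume H: "\<forall>n. (\<forall>U\<in>\<U> n. openin T U) \<and> \<Union>\<M> \<subseteq> \<Union>(\<U> n)"
    have "\<forall>k. \<exists>W. (\<forall>m. finite (W m) \<and> W m \<subseteq> \<U> (prod_encode (k, m))) \<and> h k \<subseteq> (\<Union>m. \<Union>(W m))"
    proof
      fix k
      have Mk: "Msub T (h k)" using assms(2) rh by auto
      have "\<forall>m. (\<forall>U\<in>\<U> (prod_encode (k, m)). openin T U) \<and> h k \<subseteq> \<Union>(\<U> (prod_encode (k, m)))"
        using H rh by blast
      then show "\<exists>W. (\<forall>m. finite (W m) \<and> W m \<subseteq> \<U> (prod_encode (k, m))) \<and> h k \<subseteq> (\<Union>m. \<Union>(W m))"
        by (rule Msub_ex[OF Mk])
    qed
    then obtain W where W: "\<And>k. (\<forall>m. finite (W k m) \<and> W k m \<subseteq> \<U> (prod_encode (k, m))) \<and> h k \<subseteq> (\<Union>m. \<Union>(W k m))"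
      by metis
    define \<V> where "\<V> n = (case prod_decode n of (k, m) \<Rightarrow> W k m)" for n
    show "\<exists>\<V>. (\<forall>n. finite (\<V> n) \<and> \<V> n \<subseteq> \<U> n) \<and> \<Union>\<M> \<subseteq> (\<Union>n. \<Union>(\<V> n))"
    proof (intro exI conjI allI)
      fix n
      obtain k m where km: "prod_decode n = (k, m)" by (cases "prod_decode n")
      then have "n = prod_encode (k, m)" by (metis prod_decode_inverse)
      then show "finite (\<V> n)" "\<V> n \<subseteq> \<U> n" using W km unfolding \<V>_def by auto
    next
      show "\<Union>\<M> \<subseteq> (\<Union>n. \<Union>(\<V> n))"
      proof
        fix x assume "x \<in> \<Union>\<M>"
        then obtain k where "x \<in> h k" using rh by auto
        then obtain m where "x \<in> \<Union>(W k m)" using W by blast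
        moreover have "\<V> (prod_encode (k, m)) = W k m" unfolding \<V>_def by simp
        ultimately show "x \<in> (\<Union>n. \<Union>(\<V> n))" by (metis UN_I UNIV_I)
      qed
    qed
  qed
qed

lemma Lindelof_cover:
  assumes "Lindelof_space T" "\<forall>u\<in>\<U>. openin T u" "\<Union>\<U> = topspace T"
  shows "\<exists>\<V>. countable \<V> \<and> \<V> \<subseteq> \<U> \<and> \<Union>\<V> = topspace T"
  using assms unfolding Lindelof_space_def by blast

theorem theorem4p1:
  fixes X :: "'a topology" and Y :: "'b topology" and f :: "'a \<Rightarrow> 'b"
  assumes "continuous_map X Y f"
    and "f ` topspace X = topspace Y"
    and "locally_Menger X"
    and "weakly_perfect_map X Y f \<or> biquotient_map X Y f"
  shows "locally_Menger Y"
proof -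
  have "\<forall>x. \<exists>U M. x \<in> topspace X \<longrightarrow> openin X U \<and> M \<subseteq> topspace X \<and>
        Menger_space (subtopology X M) \<and> x \<in> U \<and> U \<subseteq> M"
    using assms(3) unfolding locally_Menger_def by blast
  then obtain U M where UM: "\<And>x. x \<in> topspace X \<Longrightarrow> openin X (U x) \<and> M x \<subseteq> topspace X \<and>
        Menger_space (subtopology X (M x)) \<and> x \<in> U x \<and> U x \<subseteq> M x"
    by metis
  show ?thesis
    unfolding locally_Menger_def
  proof
    fix y assume y: "y \<in> topspace Y"
    define \<Phi> where "\<Phi> = {x \<in> topspace X. f x = y}"
    have key: "\<exists>K V. K \<subseteq> topspace X \<and> countable K \<and> openin Y V \<and> y \<in> V \<and> V \<subseteq> f ` (\<Union>x\<in>K. U x)"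
      using assms(4)
    proof
      assume wp: "weakly_perfect_map X Y f"
      have L: "Lindelof_space (subtopology X \<Phi>)"
        using wp y unfolding weakly_perfect_map_def \<Phi>_def by blast
      have PX: "\<Phi> \<subseteq> topspace X" unfolding \<Phi>_def by blast
      have ts: "topspace (subtopology X \<Phi>) = \<Phi>" using PX by (simp add: Int_absorb1)
      have "\<forall>u\<in>(\<lambda>x. \<Phi> \<inter> U x) ` \<Phi>. openin (subtopology X \<Phi>) u"
      proof
        fix u assume "u \<in> (\<lambda>x. \<Phi> \<inter> U x) ` \<Phi>"
        then obtain x where "x \<in> \<Phi>" "u = \<Phi> \<inter> U x" by blast
        moreover then have "openin X (U x)" using UM PX by blast
        ultimately show "openin (subtopology X \<Phi>) u" by (simp add: openin_subtopology_Int2)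
      qed
      moreover have "\<Union>((\<lambda>x. \<Phi> \<inter> U x) ` \<Phi>) = topspace (subtopology X \<Phi>)"
      proof -
        have "\<And>x. x \<in> \<Phi> \<Longrightarrow> x \<in> U x" using UM PX by blast
        then show ?thesis unfolding ts by blast
      qed
      ultimately have cov: "(\<forall>u\<in>(\<lambda>x. \<Phi> \<inter> U x) ` \<Phi>. openin (subtopology X \<Phi>) u) \<and>
          \<Union>((\<lambda>x. \<Phi> \<inter> U x) ` \<Phi>) = topspace (subtopology X \<Phi>)" by (rule conjI)
      have "\<exists>\<V>. countable \<V> \<and> \<V> \<subseteq> (\<lambda>x. \<Phi> \<inter> U x) ` \<Phi> \<and>
          \<Union>\<V> = topspace (subtopology X \<Phi>)"
        by (rule Lindelof_cover[OF L conjunct1[OF cov] conjunct2[OF cov]])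
      then obtain \<V> where V1: "countable \<V>" and V2: "\<V> \<subseteq> (\<lambda>x. \<Phi> \<inter> U x) ` \<Phi>"
          and V3: "\<Union>\<V> = topspace (subtopology X \<Phi>)" by (elim exE conjE)
      obtain K where K: "countable K" "K \<subseteq> \<Phi>" "\<V> = (\<lambda>x. \<Phi> \<inter> U x) ` K"
        using countable_subset_image[THEN iffD1, OF conjI[OF V1 V2]] by blast
      define W where "W = (\<Union>x\<in>K. U x)"
      have PW: "\<Phi> \<subseteq> W"
        using V3 K(3) ts unfolding W_def by blast
      have "openin X W" unfolding W_def
      proof (rule openin_Union)
        fix S assume "S \<in> U ` K"
        then show "openin X S" using K(2) PX UM by blast
      qed
      then have "closedin X (topspace X - W)" by (simp add: closedin_diff)
      then have cl: "closedin Y (f ` (topspace X - W))"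
        using wp unfolding weakly_perfect_map_def closed_map_def by blast
      define V where "V = topspace Y - f ` (topspace X - W)"
      have "openin Y V" unfolding V_def using cl by auto
      moreover have "y \<in> V" unfolding V_def using y PW \<Phi>_def by auto
      moreover have "V \<subseteq> f ` W" unfolding V_def using assms(2) by auto
      moreover have "K \<subseteq> topspace X" using K(2) PX by blast
      ultimately show ?thesis using K(1) unfolding W_def by blast
    next
      assume bq: "biquotient_map X Y f"
      have "\<forall>u\<in>U ` topspace X. openin X u" using UM by blast
      moreover have "\<Phi> \<subseteq> \<Union>(U ` topspace X)"
      proof
        fix x assume "x \<in> \<Phi>"
        then have "x \<in> topspace X" unfolding \<Phi>_def by blast
        then show "x \<in> \<Union>(U ` topspace X)" using UM by blast
      qed
      ultimately obtain \<F> V where FV: "finite \<F>" "\<F> \<subseteq> U ` topspace X" "openin Y V" "y \<in> V"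
          "V \<subseteq> (\<Union>u\<in>\<F>. f ` u)"
        using bq y unfolding biquotient_map_def \<Phi>_def by blast
      then obtain K where K: "K \<subseteq> topspace X" "finite K" "\<F> = U ` K"
        by (meson finite_subset_image)
      have "V \<subseteq> f ` (\<Union>x\<in>K. U x)" using FV(5) K by (simp add: image_UN)
      moreover have "countable K" using K(2) by (rule countable_finite)
      ultimately show ?thesis using K(1) FV(3,4) by blast
    qed
    then obtain K V where KV: "K \<subseteq> topspace X" "countable K" "openin Y V" "y \<in> V"
        "V \<subseteq> f ` (\<Union>x\<in>K. U x)" by blast
    define Z where "Z = \<Union>((\<lambda>x. f ` M x) ` K)"
    have "Msub Y Z" unfolding Z_def
    proof (rule Msub_Union)
      show "countable ((\<lambda>x. f ` M x) ` K)" using KV by auto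
      fix N assume "N \<in> (\<lambda>x. f ` M x) ` K"
      then obtain x where x: "x \<in> K" "N = f ` M x" by auto
      then have xX: "x \<in> topspace X" using KV(1) by blast
      then have "Msub X (M x)" using UM[OF xX] by (intro Menger_imp_Msub) auto
      then show "Msub Y N" unfolding x(2) using UM[OF xX] assms(1) by (intro Msub_image) auto
    qed
    moreover have ZY: "Z \<subseteq> topspace Y"
    proof -
      have "\<And>x. x \<in> K \<Longrightarrow> f ` M x \<subseteq> topspace Y"
      proof -
        fix x assume "x \<in> K"
        then have "M x \<subseteq> topspace X" using UM KV(1) by blast
        then show "f ` M x \<subseteq> topspace Y" using assms(2) by blast
      qed
      then show ?thesis unfolding Z_def by blast
    qed
    ultimately have "Menger_space (subtopology Y Z)" by (rule Msub_imp_Menger)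
    moreover have "V \<subseteq> Z"
    proof
      fix z assume "z \<in> V"
      then obtain x a where "x \<in> K" "a \<in> U x" "z = f a" using KV(5) by blast
      moreover then have "U x \<subseteq> M x" using UM KV(1) by blast
      ultimately show "z \<in> Z" unfolding Z_def by blast
    qed
    ultimately show "\<exists>U Ya. openin Y U \<and> Ya \<subseteq> topspace Y \<and> Menger_space (subtopology Y Ya) \<and> y \<in> U \<and> U \<subseteq> Ya"
      using KV(3,4) ZY by blast
  qed
qed

end
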